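(* Let $M\ge2$, $u:\{0,1\}^M\to\mathbb R$, let $h$ be the solution of the Dirichlet problem on ${\mathbb T}^{(M)}$ with boundary data $u$, and let $a$, $\Sigma$ be as follows: $a(z^{(n)})=h(z^{(n)})-h(z^{(n-1)})$ and $\Sigma(z^{(n)})=\sum_{y\in\{0,1\}^{M-n}}u(z^{(n)}y)$. Set $b_n=(2^{M-n+1}-1)^{-1}$ for $1\le n\le M$. Then for all $z\in\{0,1\}^M$ and $1\le n\le M-1$, $$h(z^{(n)})=b_n\Sigma(z^{(n)})+\sum_{\ell=1}^{n-1}\frac{b_{n-\ell+1}\,b_{n-\ell}}{b_{n+1}}\,\Sigma(z^{(n-\ell)})$$ and $$a(z^{(n)})=b_n\Sigma(z^{(n)})+\sum_{\ell=1}^{n-1}b_{n-\ell}\,\Sigma(z^{(n-\ell)})\left(\frac{b_{n-\ell+1}}{b_{n+1}}-\frac{b_{n-\ell+1}}{b_n}\right).$$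
   Context: Binary tree: for $n\ge0$, $\{0,1\}^n$ is the set of vertices of generation $n$ (words $z=z_1\cdots z_n$; generation $0$ is the root $\emptyset$). For a vertex $z$ of generation $n$, its children are $z0,z1$, and for $0\le m\le n$, $z^{(m)}=z_1\cdots z_m$ is its ancestor in generation $m$; $zy$ denotes concatenation of words. ${\mathbb T}^{(M)}$ is the tree of generations $0,\dots,M$. Dirichlet problem: given $M\ge1$ and $u:\{0,1\}^M\to\mathbb R$, its solution is the unique $h$ on the vertices of ${\mathbb T}^{(M)}$ with $h(\emptyset)=0$, $h(z)=u(z)$ for $z\in\{0,1\}^M$, and $h(z0)+h(z1)+h(z^{(n-1)})=3h(z)$ for all $z\in\{0,1\}^n$, $1\le n<M$. *)

theory Defs
  imports Main "HOL.Real"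
begin

text \<open>Vertices of the binary tree are words over {0,1}, represented as bool lists
  (False = 0, True = 1). Generation n = words of length n. The ancestor z^(m) is
  take m z, concatenation zy is z @ y, children of z are z @ [False], z @ [True].\<close>

definition is_dirichlet_solution :: "nat \<Rightarrow> (bool list \<Rightarrow> real) \<Rightarrow> (bool list \<Rightarrow> real) \<Rightarrow> bool" where
  "is_dirichlet_solution M u h \<longleftrightarrow>
     h [] = 0 \<and>
     (\<forall>z. length z = M \<longrightarrow> h z = u z) \<and>
     (\<forall>z. 1 \<le> length z \<and> length z < M \<longrightarrow>
        h (z @ [False]) + h (z @ [True]) + h (take (length z - 1) z) = 3 * h z)"

definition tree_Sigma :: "nat \<Rightarrow> (bool list \<Rightarrow> real) \<Rightarrow> bool list \<Rightarrow> real" where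
  "tree_Sigma M u w = (\<Sum>y\<in>{y::bool list. length y = M - length w}. u (w @ y))"

definition tree_a :: "(bool list \<Rightarrow> real) \<Rightarrow> bool list \<Rightarrow> real" where
  "tree_a h w = h w - h (take (length w - 1) w)"

definition tree_b :: "nat \<Rightarrow> nat \<Rightarrow> real" where
  "tree_b M n = 1 / (2 ^ (M - n + 1) - 1)"

end

theory Submission
  imports Defs
begin

lemma fin_len: "finite {y::bool list. length y = k}"
proof -
  have "finite {xs. set xs \<subseteq> (UNIV::bool set) \<and> length xs = k}"
    by (rule finite_lists_length_eq) simp
  then show ?thesis by simp
qed

lemma sum_len_Suc:
  "(\<Sum>y\<in>{y::bool list. length y = Suc k}. f y) =
   (\<Sum>y\<in>{y. length y = k}. f (False#y) + f (True#y))"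
proof -
  let ?A = "{y::bool list. length y = k}"
  have eq: "{y::bool list. length y = Suc k} = (\<lambda>(b,y). b#y) ` (UNIV \<times> ?A)"
  proof (rule set_eqI)
    fix x :: "bool list"
    show "x \<in> {y. length y = Suc k} \<longleftrightarrow> x \<in> (\<lambda>(b,y). b#y) ` (UNIV \<times> ?A)"
      by (cases x) auto
  qed
  have inj: "inj_on (\<lambda>(b,y). b#y) (UNIV \<times> ?A)"
    by (auto simp: inj_on_def)
  have "(\<Sum>y\<in>{y::bool list. length y = Suc k}. f y) = (\<Sum>p\<in>UNIV \<times> ?A. f ((\<lambda>(b,y). b#y) p))"
    unfolding eq by (rule sum.reindex[OF inj, unfolded comp_def])
  also have "\<dots> = (\<Sum>b\<in>UNIV. \<Sum>y\<in>?A. f (b#y))"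
    by (simp only: sum.cartesian_product split_def)
  also have "\<dots> = (\<Sum>y\<in>?A. f (False#y)) + (\<Sum>y\<in>?A. f (True#y))"
    by (simp add: UNIV_bool)
  also have "\<dots> = (\<Sum>y\<in>?A. f (False#y) + f (True#y))"
    by (simp add: sum.distrib)
  finally show ?thesis .
qed

lemma G_formula:
  assumes sol: "is_dirichlet_solution M u h"
  shows "1 \<le> length w \<Longrightarrow> length w + k \<le> M \<Longrightarrow>
    (\<Sum>y\<in>{y::bool list. length y = k}. h (w @ y)) =
      2^k * h w + (2^k - 1) * (h w - h (take (length w - 1) w))"
proof (induction k arbitrary: w)
  case 0
  have "{y::bool list. length y = 0} = {[]}" by auto
  then show ?case by simp
next
  case (Suc k)
  let ?p = "h (take (length w - 1) w)"
  have harm: "h (w @ [False]) + h (w @ [True]) + ?p = 3 * h w"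
    using sol Suc.prems unfolding is_dirichlet_solution_def by auto
  have IF: "(\<Sum>y\<in>{y::bool list. length y = k}. h ((w@[False]) @ y)) =
      2^k * h (w@[False]) + (2^k - 1) * (h (w@[False]) - h w)"
    using Suc.IH[of "w@[False]"] Suc.prems by simp
  have IT: "(\<Sum>y\<in>{y::bool list. length y = k}. h ((w@[True]) @ y)) =
      2^k * h (w@[True]) + (2^k - 1) * (h (w@[True]) - h w)"
    using Suc.IH[of "w@[True]"] Suc.prems by simp
  have "(\<Sum>y\<in>{y::bool list. length y = Suc k}. h (w @ y)) =
     (\<Sum>y\<in>{y::bool list. length y = k}. h ((w@[False]) @ y)) +
     (\<Sum>y\<in>{y::bool list. length y = k}. h ((w@[True]) @ y))"
    by (simp add: sum_len_Suc sum.distrib)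
  also have "\<dots> = 2^k * h (w@[False]) + (2^k - 1) * (h (w@[False]) - h w)
     + (2^k * h (w@[True]) + (2^k - 1) * (h (w@[True]) - h w))"
    using IF IT by simp
  also have "\<dots> = 2^(Suc k) * h w + (2^(Suc k) - 1) * (h w - ?p)"
  proof -
    have hT: "h (w @ [True]) = 3 * h w - ?p - h (w @ [False])" using harm by linarith
    show ?thesis unfolding hT by (simp add: algebra_simps)
  qed
  finally show ?case .
qed

lemma Sigma_formula:
  assumes sol: "is_dirichlet_solution M u h" and lz: "length z = M"
    and n: "1 \<le> n" "n \<le> M"
  shows "tree_Sigma M u (take n z) =
     2^(M-n) * h (take n z) + (2^(M-n) - 1) * (h (take n z) - h (take (n-1) z))"
proof -
  have lw: "length (take n z) = n" using lz n by simp
  have "tree_Sigma M u (take n z) = (\<Sum>y\<in>{y::bool list. length y = M - n}. h (take n z @ y))"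
    unfolding tree_Sigma_def lw
  proof (rule sum.cong)
    fix y :: "bool list" assume "y \<in> {y. length y = M - n}"
    then have "length (take n z @ y) = M" using lw n by simp
    then show "u (take n z @ y) = h (take n z @ y)"
      using sol unfolding is_dirichlet_solution_def by auto
  qed simp
  also have "\<dots> = 2^(M-n) * h (take n z) + (2^(M-n) - 1) * (h (take n z) - h (take (length (take n z) - 1) (take n z)))"
    by (rule G_formula[OF sol]) (use lw n in auto)
  also have "take (length (take n z) - 1) (take n z) = take (n-1) z" using lw by simp
  finally show ?thesis .
qed

theorem lemma2p2:
  fixes M :: nat and u h :: "bool list \<Rightarrow> real"
  assumes "M \<ge> 2"
    and "is_dirichlet_solution M u h"
  shows "\<forall>z n. length z = M \<and> 1 \<le> n \<and> n \<le> M - 1 \<longrightarrow>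
     h (take n z) = tree_b M n * tree_Sigma M u (take n z)
        + (\<Sum>l = 1..n-1. tree_b M (n - l + 1) * tree_b M (n - l) / tree_b M (n + 1)
                          * tree_Sigma M u (take (n - l) z))
   \<and> tree_a h (take n z) = tree_b M n * tree_Sigma M u (take n z)
        + (\<Sum>l = 1..n-1. tree_b M (n - l) * tree_Sigma M u (take (n - l) z)
             * (tree_b M (n - l + 1) / tree_b M (n + 1) - tree_b M (n - l + 1) / tree_b M n))"
proof (intro allI impI)
  fix z :: "bool list" and n :: nat assume A: "length z = M \<and> 1 \<le> n \<and> n \<le> M - 1"
  have lz: "length z = M" using A by simp
  define H where "H j = h (take j z)" for j
  define S where "S j = tree_Sigma M u (take j z)" for j
  define B where "B j = tree_b M j" for j
  define g where "g j = B (j+1) * B j * S j" for j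
  have Bpos: "B j > 0" if "j \<le> M" for j
  proof -
    have p: "(1::real) \<le> 2 ^ (M - j)" by simp
    then show ?thesis unfolding B_def tree_b_def using p by (simp; linarith)
  qed
  have H0: "H 0 = 0" using assms(2) unfolding H_def is_dirichlet_solution_def by simp
  have rec: "H j * B (j+1) = H (j-1) * B j + g j" if j: "1 \<le> j" "j \<le> M - 1" for j
  proof -
    define c :: real where "c = 2^(M-j)"
    have c2: "c \<ge> 2"
    proof -
      have "(2::real) ^ (M - j) \<ge> 2 ^ 1" by (rule power_increasing) (use j in auto)
      then show ?thesis unfolding c_def by simp
    qed
    have Bj: "B j = 1 / (2*c - 1)" unfolding B_def tree_b_def c_def
      using j by (simp add: Suc_diff_le)
    have e: "M - (j+1) + 1 = M - j" using j by simp
    have Bj1: "B (j+1) = 1 / (c - 1)" unfolding B_def tree_b_def c_def e by simp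
    have Sj: "S j = c * H j + (c - 1) * (H j - H (j-1))"
      unfolding S_def H_def c_def using Sigma_formula[OF assms(2) lz, of j] j by simp
    have d1: "c - 1 \<noteq> 0" and d2: "2*c - 1 \<noteq> 0" using c2 by auto
    have E: "(2*c - 1) * H j = S j + (c - 1) * H (j-1)" unfolding Sj by (simp add: algebra_simps)
    have "H (j-1) * (1 / (2*c - 1)) + 1 / (c - 1) * (1 / (2*c - 1)) * S j
        = ((c - 1) * H (j-1) + S j) / ((c - 1) * (2*c - 1))"
      using d1 d2 by (simp add: add_divide_distrib)
    also have "\<dots> = ((2*c - 1) * H j) / ((c - 1) * (2*c - 1))" using E by simp
    also have "\<dots> = H j * (1 / (c - 1))" using d2 by simp
    finally show ?thesis unfolding g_def Bj Bj1 by simp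
  qed
  have closed: "H j * B (j+1) = (\<Sum>i = 1..j. g i)" if "j \<le> M - 1" for j
    using that
  proof (induction j)
    case 0 then show ?case by (simp add: H0)
  next
    case (Suc j)
    have "H (Suc j) * B (Suc j + 1) = H j * B (j + 1) + g (Suc j)"
      using rec[of "Suc j"] Suc.prems by simp
    also have "\<dots> = (\<Sum>i = 1..j. g i) + g (Suc j)" using Suc by simp
    also have "\<dots> = (\<Sum>i = 1..Suc j. g i)" by simp
    finally show ?case .
  qed
  have n1: "1 \<le> n" "n \<le> M - 1" using A by auto
  have Bn: "B n > 0" "B (n+1) > 0" using Bpos n1 by auto
  have rev: "(\<Sum>i = 1..n-1. f i) = (\<Sum>l = 1..n-1. f (n - l))" for f :: "nat \<Rightarrow> real"
  proof -
    have "(\<Sum>i = 1..n-1. f i) = (\<Sum>l = 1..n-1. f (n - 1 + 1 - l))"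
      by (rule sum.atLeastAtMost_rev)
    also have "\<dots> = (\<Sum>l = 1..n-1. f (n - l))" using n1 by simp
    finally show ?thesis .
  qed
  have split: "(\<Sum>i = 1..n. g i) = (\<Sum>i = 1..n-1. g i) + g n"
  proof -
    obtain m where "n = Suc m" using n1 by (cases n) auto
    then show ?thesis by simp
  qed
  have hn: "H n = (\<Sum>i = 1..n-1. g i) / B (n+1) + B n * S n"
  proof -
    have "H n = (\<Sum>i = 1..n. g i) / B (n+1)" using closed[OF n1(2)] Bn by (simp add: field_simps)
    also have "\<dots> = (\<Sum>i = 1..n-1. g i) / B (n+1) + g n / B (n+1)"
      by (subst split) (simp add: add_divide_distrib)
    also have "g n / B (n+1) = B n * S n" using Bn by (simp add: g_def)
    finally show ?thesis .
  qed
  have hn1: "H (n-1) = (\<Sum>i = 1..n-1. g i) / B n"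
    using closed[of "n-1"] n1 Bn by (simp add: field_simps)
  have eq1: "(\<Sum>i = 1..n-1. g i) / B (n+1) = (\<Sum>l = 1..n-1. B (n - l + 1) * B (n - l) / B (n + 1) * S (n - l))"
  proof -
    have r: "(\<Sum>i = 1..n-1. g i) = (\<Sum>l = 1..n-1. g (n - l))" by (rule rev)
    have "(\<Sum>l = 1..n-1. g (n - l)) / B (n+1) = (\<Sum>l = 1..n-1. B (n - l + 1) * B (n - l) / B (n + 1) * S (n - l))"
      unfolding sum_divide_distrib g_def by (rule sum.cong) (simp_all add: algebra_simps)
    then show ?thesis by (simp only: r)
  qed
  have eq2: "(\<Sum>i = 1..n-1. g i) / B (n+1) - (\<Sum>i = 1..n-1. g i) / B n =
     (\<Sum>l = 1..n-1. B (n - l) * S (n - l) * (B (n - l + 1) / B (n + 1) - B (n - l + 1) / B n))"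
  proof -
    have r: "(\<Sum>i = 1..n-1. g i) = (\<Sum>l = 1..n-1. g (n - l))" by (rule rev)
    have "(\<Sum>l = 1..n-1. g (n - l)) / B (n+1) - (\<Sum>l = 1..n-1. g (n - l)) / B n =
     (\<Sum>l = 1..n-1. B (n - l) * S (n - l) * (B (n - l + 1) / B (n + 1) - B (n - l + 1) / B n))"
      unfolding sum_divide_distrib sum_subtractf[symmetric] g_def
      by (rule sum.cong) (simp_all add: algebra_simps diff_divide_distrib)
    then show ?thesis by (simp only: r)
  qed
  have ta: "tree_a h (take n z) = H n - H (n-1)"
    unfolding tree_a_def H_def using lz n1 by simp
  show "h (take n z) = tree_b M n * tree_Sigma M u (take n z)
        + (\<Sum>l = 1..n-1. tree_b M (n - l + 1) * tree_b M (n - l) / tree_b M (n + 1)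
                          * tree_Sigma M u (take (n - l) z))
   \<and> tree_a h (take n z) = tree_b M n * tree_Sigma M u (take n z)
        + (\<Sum>l = 1..n-1. tree_b M (n - l) * tree_Sigma M u (take (n - l) z)
             * (tree_b M (n - l + 1) / tree_b M (n + 1) - tree_b M (n - l + 1) / tree_b M n))"
  proof
    show "h (take n z) = tree_b M n * tree_Sigma M u (take n z)
        + (\<Sum>l = 1..n-1. tree_b M (n - l + 1) * tree_b M (n - l) / tree_b M (n + 1)
                          * tree_Sigma M u (take (n - l) z))"
      using hn eq1 unfolding H_def S_def B_def by simp
    show "tree_a h (take n z) = tree_b M n * tree_Sigma M u (take n z)
        + (\<Sum>l = 1..n-1. tree_b M (n - l) * tree_Sigma M u (take (n - l) z)
             * (tree_b M (n - l + 1) / tree_b M (n + 1) - tree_b M (n - l + 1) / tree_b M n))"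
      using ta hn hn1 eq2 unfolding H_def S_def B_def by simp
  qed
qed

end
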